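(* Let $G$ be a finite simple graph on $[d]$ and $<$ a monomial order on $R[G]$. Let $\mathcal{G}_1$ be the reduced Gröbner basis of $J_G$ with respect to $<$, and let $\mathcal{G}_2=\{x_Sx_T : S,T\in S(G),\ S\cap T\neq\emptyset\}$. Then $\mathcal{G}=(\mathcal{G}_1\setminus M_G)\cup\mathcal{G}_2$ is the reduced Gröbner basis of $K_G$ with respect to $<$.
   Context: A stable set of $G$ is a subset of $[d]$ with no edge of $G$ (including $\emptyset$ and singletons); $S(G)$ is the set of stable sets; $R[G]=\mathbb{K}[x_S : S\in S(G)]$ over a field $\mathbb{K}$, all variables of degree $1$. $J_G$ is the ideal generated by all $x_{S_1}x_{S_2}-x_{S_3}x_{S_4}$ with $S_i\in S(G)$, $S_1\cap S_2=S_3\cap S_4=\emptyset$, $S_1\cup S_2=S_3\cup S_4$ (the binomials ${\bf x}_f-{\bf x}_g$ for $2$-colorings $f,g$ of a common induced subgraph). $M_G=\langle x_Sx_T : S,T\in S(G),\ S\cap T\neq\emptyset\rangle$ and $K_G=J_G+M_G$. A Gröbner basis of $I$ w.r.t. $<$ is a finite subset of $I$ whose leading monomials generate the initial ideal ${\rm in}_<(I)$; it is reduced if all leading coefficients are $1$ and no monomial of any element lies in the ideal generated by the leading monomials of the other elements. *)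

theory Defs
  imports Main "HOL-Library.Poly_Mapping"
begin

text \<open>Multivariate polynomials: a monomial is a finitely supported exponent vector,
a polynomial is a finitely supported map from monomials to coefficients.\<close>

type_synonym 'v monom = "'v \<Rightarrow>\<^sub>0 nat"
type_synonym ('v, 'k) mpoly = "'v monom \<Rightarrow>\<^sub>0 'k"

definition monom_poly :: "'v monom \<Rightarrow> ('v, 'k::zero_neq_one) mpoly" where
  "monom_poly m = Poly_Mapping.single m 1"

definition var :: "'v \<Rightarrow> ('v, 'k::zero_neq_one) mpoly" where
  "var v = monom_poly (Poly_Mapping.single v 1)"

definition poly_ring :: "'v set \<Rightarrow> ('v, 'k::zero) mpoly set" where
  "poly_ring V = {p :: ('v, 'k) mpoly. \<forall>m \<in> Poly_Mapping.keys p. Poly_Mapping.keys m \<subseteq> V}"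

definition ideal_gen :: "'v set \<Rightarrow> ('v, 'k::comm_ring_1) mpoly set \<Rightarrow> ('v, 'k) mpoly set" where
  "ideal_gen V B = {(\<Sum>b\<in>F. q b * b) | F q. finite F \<and> F \<subseteq> B \<and> (\<forall>b\<in>F. q b \<in> poly_ring V)}"

definition monomial_order :: "'v set \<Rightarrow> ('v monom \<Rightarrow> 'v monom \<Rightarrow> bool) \<Rightarrow> bool" where
  "monomial_order V lt \<longleftrightarrow>
     (\<forall>m. Poly_Mapping.keys m \<subseteq> V \<longrightarrow> \<not> lt m m) \<and>
     (\<forall>m n k. Poly_Mapping.keys m \<subseteq> V \<longrightarrow> Poly_Mapping.keys n \<subseteq> V \<longrightarrow> Poly_Mapping.keys k \<subseteq> V \<longrightarrow> lt m n \<longrightarrow> lt n k \<longrightarrow> lt m k) \<and>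
     (\<forall>m n. Poly_Mapping.keys m \<subseteq> V \<longrightarrow> Poly_Mapping.keys n \<subseteq> V \<longrightarrow> m = n \<or> lt m n \<or> lt n m) \<and>
     wf {(m, n). Poly_Mapping.keys m \<subseteq> V \<and> Poly_Mapping.keys n \<subseteq> V \<and> lt m n} \<and>
     (\<forall>m n k. Poly_Mapping.keys m \<subseteq> V \<longrightarrow> Poly_Mapping.keys n \<subseteq> V \<longrightarrow> Poly_Mapping.keys k \<subseteq> V \<longrightarrow> lt m n \<longrightarrow> lt (m + k) (n + k))"

definition lm :: "('v monom \<Rightarrow> 'v monom \<Rightarrow> bool) \<Rightarrow> ('v, 'k::zero) mpoly \<Rightarrow> 'v monom" where
  "lm lt p = (THE m. m \<in> Poly_Mapping.keys p \<and> (\<forall>m' \<in> Poly_Mapping.keys p. m' \<noteq> m \<longrightarrow> lt m' m))"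

definition lc :: "('v monom \<Rightarrow> 'v monom \<Rightarrow> bool) \<Rightarrow> ('v, 'k::zero) mpoly \<Rightarrow> 'k" where
  "lc lt p = Poly_Mapping.lookup p (lm lt p)"

definition initial_ideal :: "'v set \<Rightarrow> ('v monom \<Rightarrow> 'v monom \<Rightarrow> bool) \<Rightarrow> ('v, 'k::comm_ring_1) mpoly set \<Rightarrow> ('v, 'k) mpoly set" where
  "initial_ideal V lt I = ideal_gen V {monom_poly (lm lt p) | p. p \<in> I \<and> p \<noteq> 0}"

definition groebner_basis :: "'v set \<Rightarrow> ('v monom \<Rightarrow> 'v monom \<Rightarrow> bool) \<Rightarrow> ('v, 'k::comm_ring_1) mpoly set \<Rightarrow> ('v, 'k) mpoly set \<Rightarrow> bool" where
  "groebner_basis V lt I Gb \<longleftrightarrow> finite Gb \<and> Gb \<subseteq> I \<and>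
     ideal_gen V {monom_poly (lm lt g) | g. g \<in> Gb \<and> g \<noteq> 0} = initial_ideal V lt I"

definition reduced_groebner_basis :: "'v set \<Rightarrow> ('v monom \<Rightarrow> 'v monom \<Rightarrow> bool) \<Rightarrow> ('v, 'k::comm_ring_1) mpoly set \<Rightarrow> ('v, 'k) mpoly set \<Rightarrow> bool" where
  "reduced_groebner_basis V lt I Gb \<longleftrightarrow> groebner_basis V lt I Gb \<and>
     (\<forall>g \<in> Gb. g \<noteq> 0 \<and> lc lt g = 1 \<and>
        (\<forall>m \<in> Poly_Mapping.keys g. (monom_poly m :: ('v, 'k) mpoly) \<notin> ideal_gen V {monom_poly (lm lt h) | h. h \<in> Gb - {g} \<and> h \<noteq> 0}))"

definition simple_graph :: "nat \<Rightarrow> nat set set \<Rightarrow> bool" where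
  "simple_graph d E \<longleftrightarrow> (\<forall>e \<in> E. e \<subseteq> {1..d} \<and> card e = 2)"

definition stable_sets :: "nat \<Rightarrow> nat set set \<Rightarrow> nat set set" where
  "stable_sets d E = {S. S \<subseteq> {1..d} \<and> (\<forall>e \<in> E. \<not> e \<subseteq> S)}"

text \<open>R[G] has variables x_S for S in S(G); the variable x_S is var S.\<close>

definition J_gens :: "nat \<Rightarrow> nat set set \<Rightarrow> (nat set, 'k::comm_ring_1) mpoly set" where
  "J_gens d E = {var S1 * var S2 - var S3 * var S4 | S1 S2 S3 S4.
      S1 \<in> stable_sets d E \<and> S2 \<in> stable_sets d E \<and> S3 \<in> stable_sets d E \<and> S4 \<in> stable_sets d E \<and>
      S1 \<inter> S2 = {} \<and> S3 \<inter> S4 = {} \<and> S1 \<union> S2 = S3 \<union> S4}"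

definition M_gens :: "nat \<Rightarrow> nat set set \<Rightarrow> (nat set, 'k::comm_ring_1) mpoly set" where
  "M_gens d E = {var S * var T | S T. S \<in> stable_sets d E \<and> T \<in> stable_sets d E \<and> S \<inter> T \<noteq> {}}"

definition J_ideal :: "nat \<Rightarrow> nat set set \<Rightarrow> (nat set, 'k::comm_ring_1) mpoly set" where
  "J_ideal d E = ideal_gen (stable_sets d E) (J_gens d E)"

definition M_ideal :: "nat \<Rightarrow> nat set set \<Rightarrow> (nat set, 'k::comm_ring_1) mpoly set" where
  "M_ideal d E = ideal_gen (stable_sets d E) (M_gens d E)"

definition K_ideal :: "nat \<Rightarrow> nat set set \<Rightarrow> (nat set, 'k::comm_ring_1) mpoly set" where
  "K_ideal d E = ideal_gen (stable_sets d E) (J_gens d E \<union> M_gens d E)"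

end

theory Submission
  imports Defs
begin

lemma poly_ring_zero: "0 \<in> poly_ring V" by (simp add: poly_ring_def)

lemma poly_ring_add:
  assumes "p \<in> poly_ring V" "q \<in> poly_ring V"
  shows "p + q \<in> poly_ring V"
  unfolding poly_ring_def
proof (intro CollectI ballI)
  fix m assume m: "m \<in> Poly_Mapping.keys (p + q)"
  hence "m \<in> Poly_Mapping.keys p \<union> Poly_Mapping.keys q" using keys_add by (rule subsetD[rotated])
  thus "Poly_Mapping.keys m \<subseteq> V" using assms unfolding poly_ring_def by blast
qed
lemma poly_ring_uminus: "p \<in> poly_ring V \<Longrightarrow> - (p::('v,'k::ab_group_add) mpoly) \<in> poly_ring V"
  unfolding poly_ring_def by simp

lemma poly_ring_diff:
  assumes "p \<in> poly_ring V" "q \<in> poly_ring V"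
  shows "p - (q::('v,'k::ab_group_add) mpoly) \<in> poly_ring V"
  unfolding poly_ring_def
proof (intro CollectI ballI)
  fix m assume m: "m \<in> Poly_Mapping.keys (p - q)"
  hence "m \<in> Poly_Mapping.keys p \<union> Poly_Mapping.keys q" using keys_diff by (rule subsetD[rotated])
  thus "Poly_Mapping.keys m \<subseteq> V" using assms unfolding poly_ring_def by blast
qed

lemma keys_add_mon: "Poly_Mapping.keys ((a::'v monom) + b) = Poly_Mapping.keys a \<union> Poly_Mapping.keys b"
  by (auto simp: in_keys_iff lookup_add)

lemma poly_ring_mult:
  assumes "p \<in> poly_ring V" "q \<in> poly_ring V"
  shows "p * (q::('v,'k::comm_ring_1) mpoly) \<in> poly_ring V"
  unfolding poly_ring_def
proof (intro CollectI ballI)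
  have p: "\<forall>m\<in>Poly_Mapping.keys p. Poly_Mapping.keys m \<subseteq> V"
    and q: "\<forall>m\<in>Poly_Mapping.keys q. Poly_Mapping.keys m \<subseteq> V" using assms by (auto simp: poly_ring_def)
  fix m assume m: "m \<in> Poly_Mapping.keys (p * q)"
  have "m \<in> {a + b | a b. a \<in> Poly_Mapping.keys p \<and> b \<in> Poly_Mapping.keys q}"
    using m keys_mult[of p q] by (rule subsetD[rotated])
  then obtain a b where "m = a + b" "a \<in> Poly_Mapping.keys p" "b \<in> Poly_Mapping.keys q" by blast
  thus "Poly_Mapping.keys m \<subseteq> V" using p q by (simp add: keys_add_mon)
qed

lemma poly_ring_single: "Poly_Mapping.keys m \<subseteq> V \<Longrightarrow> Poly_Mapping.single m c \<in> poly_ring V"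
  unfolding poly_ring_def by simp

lemma poly_ring_one: "(1::('v,'k::comm_ring_1) mpoly) \<in> poly_ring V"
  unfolding poly_ring_def by simp

lemma ig_zero: "0 \<in> ideal_gen V B"
  unfolding ideal_gen_def by (rule CollectI, rule exI[of _ "{}"], auto)

lemma ig_add:
  assumes "p \<in> ideal_gen V B" "q \<in> ideal_gen V B"
  shows "p + q \<in> ideal_gen V B"
proof -
  obtain F1 q1 where 1: "p = (\<Sum>b\<in>F1. q1 b * b)" "finite F1" "F1 \<subseteq> B" "\<forall>b\<in>F1. q1 b \<in> poly_ring V"
    using assms(1) unfolding ideal_gen_def by blast
  obtain F2 q2 where 2: "q = (\<Sum>b\<in>F2. q2 b * b)" "finite F2" "F2 \<subseteq> B" "\<forall>b\<in>F2. q2 b \<in> poly_ring V"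
    using assms(2) unfolding ideal_gen_def by blast
  define r where "r b = (if b \<in> F1 then q1 b else 0) + (if b \<in> F2 then q2 b else 0)" for b
  have "(\<Sum>b\<in>F1 \<union> F2. r b * b) = (\<Sum>b\<in>F1 \<union> F2. (if b \<in> F1 then q1 b * b else 0))
     + (\<Sum>b\<in>F1 \<union> F2. (if b \<in> F2 then q2 b * b else 0))"
    unfolding sum.distrib[symmetric] by (rule sum.cong) (auto simp: r_def distrib_right)
  also have "\<dots> = p + q" using 1 2 by (simp add: sum.inter_restrict[symmetric] Un_Int_eq)
  finally have "p + q = (\<Sum>b\<in>F1 \<union> F2. r b * b)" by simp
  moreover have "\<forall>b\<in>F1 \<union> F2. r b \<in> poly_ring V"
    using 1 2 by (auto simp: r_def intro!: poly_ring_add poly_ring_zero)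
  ultimately show ?thesis using 1 2 unfolding ideal_gen_def by blast
qed

lemma ig_mult:
  assumes "p \<in> ideal_gen V B" "r \<in> poly_ring V"
  shows "r * p \<in> ideal_gen V B"
proof -
  obtain F q where 1: "p = (\<Sum>b\<in>F. q b * b)" "finite F" "F \<subseteq> B" "\<forall>b\<in>F. q b \<in> poly_ring V"
    using assms(1) unfolding ideal_gen_def by blast
  have "r * p = (\<Sum>b\<in>F. (r * q b) * b)" using 1 by (simp add: sum_distrib_left mult.assoc)
  moreover have "\<forall>b\<in>F. r * q b \<in> poly_ring V" using 1 assms by (auto intro: poly_ring_mult)
  ultimately show ?thesis using 1 unfolding ideal_gen_def
    by (intro CollectI exI[of _ F] exI[of _ "\<lambda>b. r * q b"]) auto
qed

lemma poly_ring_minus_one: "(- 1::('v,'k::comm_ring_1) mpoly) \<in> poly_ring V"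
  by (intro poly_ring_uminus poly_ring_one)

lemma ig_uminus: "p \<in> ideal_gen V B \<Longrightarrow> - p \<in> ideal_gen V B"
  using ig_mult[OF _ poly_ring_minus_one, of p V B] by simp

lemma ig_diff: "p \<in> ideal_gen V B \<Longrightarrow> q \<in> ideal_gen V B \<Longrightarrow> p - q \<in> ideal_gen V B"
  using ig_add[of p V B "- q"] ig_uminus[of q V B] by simp

lemma ig_gen: "b \<in> B \<Longrightarrow> b \<in> ideal_gen V B"
  unfolding ideal_gen_def
  by (rule CollectI, rule exI[of _ "{b}"], rule exI[of _ "\<lambda>_. 1"], auto intro: poly_ring_one)

lemma ig_sum: "finite F \<Longrightarrow> (\<And>x. x \<in> F \<Longrightarrow> f x \<in> ideal_gen V B) \<Longrightarrow> sum f F \<in> ideal_gen V B"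
  by (induction F rule: finite_induct) (auto intro: ig_zero ig_add)

lemma ig_mono: "B \<subseteq> C \<Longrightarrow> ideal_gen V B \<subseteq> ideal_gen V C"
  unfolding ideal_gen_def by blast

lemma ig_subset:
  assumes "B \<subseteq> ideal_gen V C"
  shows "ideal_gen V B \<subseteq> ideal_gen V C"
proof
  fix p assume "p \<in> ideal_gen V B"
  then obtain F q where 1: "p = (\<Sum>b\<in>F. q b * b)" "finite F" "F \<subseteq> B" "\<forall>b\<in>F. q b \<in> poly_ring V"
    unfolding ideal_gen_def by blast
  show "p \<in> ideal_gen V C" unfolding 1(1)
    using 1 assms by (intro ig_sum ig_mult) auto
qed

lemma poly_ring_sum: "finite F \<Longrightarrow> (\<And>x. x \<in> F \<Longrightarrow> f x \<in> poly_ring V) \<Longrightarrow> sum f F \<in> poly_ring V"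
  by (induction F rule: finite_induct) (auto intro: poly_ring_zero poly_ring_add)

lemma ig_poly_ring:
  assumes "B \<subseteq> poly_ring V"
  shows "ideal_gen V B \<subseteq> poly_ring V"
proof
  fix p assume "p \<in> ideal_gen V B"
  then obtain F q where 1: "p = (\<Sum>b\<in>F. q b * b)" "finite F" "F \<subseteq> B" "\<forall>b\<in>F. q b \<in> poly_ring V"
    unfolding ideal_gen_def by blast
  show "p \<in> poly_ring V" unfolding 1(1)
    using 1 assms by (intro poly_ring_sum poly_ring_mult) auto
qed

lemma ig_union:
  assumes "p \<in> ideal_gen V (A \<union> B)"
  shows "\<exists>a b. a \<in> ideal_gen V A \<and> b \<in> ideal_gen V B \<and> p = a + b"
proof -
  obtain F q where 1: "p = (\<Sum>b\<in>F. q b * b)" "finite F" "F \<subseteq> A \<union> B" "\<forall>b\<in>F. q b \<in> poly_ring V"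
    using assms unfolding ideal_gen_def by blast
  have "p = (\<Sum>b\<in>F \<inter> A. q b * b) + (\<Sum>b\<in>F - A. q b * b)"
    using 1 by (simp add: sum.Int_Diff)
  moreover have "(\<Sum>b\<in>F \<inter> A. q b * b) \<in> ideal_gen V A"
    unfolding ideal_gen_def using 1 by blast
  moreover have "(\<Sum>b\<in>F - A. q b * b) \<in> ideal_gen V B"
    unfolding ideal_gen_def using 1 by blast
  ultimately show ?thesis by blast
qed

lemma keys_ideal_monomial:
  assumes "p \<in> ideal_gen V B" "\<And>b. b \<in> B \<Longrightarrow> \<exists>a. b = Poly_Mapping.single a 1 \<and> Q a"
    "m \<in> Poly_Mapping.keys p"
  shows "\<exists>a k. Q a \<and> m = k + a"
proof -
  obtain F q where 1: "p = (\<Sum>b\<in>F. q b * b)" "finite F" "F \<subseteq> B" "\<forall>b\<in>F. q b \<in> poly_ring V"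
    using assms unfolding ideal_gen_def by blast
  have "m \<in> (\<Union>b\<in>F. Poly_Mapping.keys (q b * b))"
    using assms(3) keys_sum[of "\<lambda>b. q b * b" F] unfolding 1(1) by (rule subsetD[rotated])
  then obtain b where b: "b \<in> F" "m \<in> Poly_Mapping.keys (q b * b)" by (rule UN_E)
  obtain a where a: "b = Poly_Mapping.single a 1" "Q a" using assms(2) b 1 by blast
  have "m \<in> {x + y | x y. x \<in> Poly_Mapping.keys (q b) \<and> y \<in> Poly_Mapping.keys b}"
    using b(2) keys_mult[of "q b" b] by (rule subsetD[rotated])
  then obtain x y where xy: "m = x + y" "y \<in> Poly_Mapping.keys b" by blast
  have "y = a" using xy(2) a(1) by (simp split: if_splits)
  thus ?thesis using a(2) xy(1) by blast
qed

definition vmon :: "'v set \<Rightarrow> 'v monom \<Rightarrow> bool" where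
  "vmon V m \<longleftrightarrow> Poly_Mapping.keys m \<subseteq> V"

lemma mo_irrefl: "monomial_order V lt \<Longrightarrow> Poly_Mapping.keys m \<subseteq> V \<Longrightarrow> \<not> lt m m"
  unfolding monomial_order_def by blast

lemma mo_trans: "monomial_order V lt \<Longrightarrow> Poly_Mapping.keys m \<subseteq> V \<Longrightarrow> Poly_Mapping.keys n \<subseteq> V
  \<Longrightarrow> Poly_Mapping.keys k \<subseteq> V \<Longrightarrow> lt m n \<Longrightarrow> lt n k \<Longrightarrow> lt m k"
  unfolding monomial_order_def by blast

lemma mo_total: "monomial_order V lt \<Longrightarrow> Poly_Mapping.keys m \<subseteq> V \<Longrightarrow> Poly_Mapping.keys n \<subseteq> V
  \<Longrightarrow> m = n \<or> lt m n \<or> lt n m"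
  unfolding monomial_order_def by blast

lemma mo_wf: "monomial_order V lt \<Longrightarrow> wf {(m, n). Poly_Mapping.keys m \<subseteq> V \<and> Poly_Mapping.keys n \<subseteq> V \<and> lt m n}"
  unfolding monomial_order_def by blast

lemma mo_add: "monomial_order V lt \<Longrightarrow> Poly_Mapping.keys m \<subseteq> V \<Longrightarrow> Poly_Mapping.keys n \<subseteq> V
  \<Longrightarrow> Poly_Mapping.keys k \<subseteq> V \<Longrightarrow> lt m n \<Longrightarrow> lt (m + k) (n + k)"
  unfolding monomial_order_def by blast

lemma keys_sum_mon: "Poly_Mapping.keys (sum (f::'a \<Rightarrow> 'v monom) A) \<subseteq> (\<Union>i\<in>A. Poly_Mapping.keys (f i))"
proof (induction A rule: infinite_finite_induct)
  case (insert i I)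
  then show ?case using keys_add_mon[of "f i" "sum f I"] by auto
qed auto

lemma mo_zero_lt:
  assumes mo: "monomial_order V lt" and k: "Poly_Mapping.keys k \<subseteq> V" "k \<noteq> 0"
  shows "lt 0 k"
proof (rule ccontr)
  assume nlt: "\<not> lt 0 k"
  have "lt k 0" using mo_total[OF mo k(1), of 0] nlt k(2) by auto
  define f where "f n = (\<Sum>i<n. k)" for n :: nat
  have kf: "Poly_Mapping.keys (f n) \<subseteq> V" for n
    using keys_sum_mon[of "\<lambda>_. k" "{..<n}"] k(1) unfolding f_def by (auto split: if_splits)
  have "(f (Suc n), f n) \<in> {(m, n). Poly_Mapping.keys m \<subseteq> V \<and> Poly_Mapping.keys n \<subseteq> V \<and> lt m n}" for n
  proof -
    have "lt (k + f n) (0 + f n)" using mo_add[OF mo k(1) _ kf \<open>lt k 0\<close>] by simp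
    moreover have "f (Suc n) = k + f n" unfolding f_def by (simp add: add.commute)
    ultimately show ?thesis using kf[of n] kf[of "Suc n"] by simp
  qed
  thus False using mo_wf[OF mo] unfolding wf_iff_no_infinite_down_chain by blast
qed

lemma mo_lt_add:
  assumes mo: "monomial_order V lt" and "Poly_Mapping.keys m \<subseteq> V" "Poly_Mapping.keys k \<subseteq> V" "k \<noteq> 0"
  shows "lt m (m + k)"
proof -
  have "lt (0 + m) (k + m)" using mo_add[OF mo _ assms(3) assms(2) mo_zero_lt[OF mo assms(3,4)]] by simp
  thus ?thesis by (simp add: add.commute)
qed

lemma keys_le_of_add: "Poly_Mapping.keys (m::'v monom) \<subseteq> V \<Longrightarrow> m = a + k \<Longrightarrow> Poly_Mapping.keys a \<subseteq> V \<and> Poly_Mapping.keys k \<subseteq> V"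
  by (simp add: keys_add_mon)

lemma mo_div_not_lt:
  assumes mo: "monomial_order V lt" and "Poly_Mapping.keys m \<subseteq> V" "m = a + k"
  shows "\<not> lt m a"
proof
  assume l: "lt m a"
  have ka: "Poly_Mapping.keys a \<subseteq> V" "Poly_Mapping.keys k \<subseteq> V" using keys_le_of_add assms(2,3) by blast+
  show False
  proof (cases "k = 0")
    case True thus False using l assms(3) mo_irrefl[OF mo ka(1)] by simp
  next
    case False
    hence "lt a m" using mo_lt_add[OF mo ka False] assms(3) by simp
    thus False using mo_trans[OF mo assms(2) ka(1) assms(2) l] mo_irrefl[OF mo assms(2)] by blast
  qed
qed

lemma lm_exists:
  assumes mo: "monomial_order V lt" and fin: "finite A" "A \<noteq> {}" and AV: "\<forall>m\<in>A. Poly_Mapping.keys m \<subseteq> V"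
  shows "\<exists>m\<in>A. \<forall>m'\<in>A. m' \<noteq> m \<longrightarrow> lt m' m"
  using fin AV
proof (induction A rule: finite_ne_induct)
  case (singleton x) thus ?case by simp
next
  case (insert x F)
  then obtain m where m: "m \<in> F" "\<forall>m'\<in>F. m' \<noteq> m \<longrightarrow> lt m' m" by auto
  have kx: "Poly_Mapping.keys x \<subseteq> V" and km: "Poly_Mapping.keys m \<subseteq> V" using insert m by auto
  show ?case
  proof (cases "lt m x")
    case True
    have "\<forall>m'\<in>insert x F. m' \<noteq> x \<longrightarrow> lt m' x"
    proof (intro ballI impI)
      fix m' assume "m' \<in> insert x F" "m' \<noteq> x"
      hence "m' \<in> F" by simp
      show "lt m' x"
      proof (cases "m' = m")
        case True thus ?thesis using \<open>lt m x\<close> by simp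
      next
        case False
        hence "lt m' m" using m \<open>m' \<in> F\<close> by blast
        thus ?thesis using mo_trans[OF mo _ km kx _ \<open>lt m x\<close>] insert.prems \<open>m' \<in> F\<close> by blast
      qed
    qed
    thus ?thesis by blast
  next
    case False
    hence "x = m \<or> lt x m" using mo_total[OF mo kx km] by auto
    hence "x \<noteq> m \<longrightarrow> lt x m" by auto
    hence "\<forall>m'\<in>insert x F. m' \<noteq> m \<longrightarrow> lt m' m" using m by auto
    thus ?thesis using m by blast
  qed
qed

lemma lm_unique:
  assumes mo: "monomial_order V lt" and AV: "\<forall>m\<in>A. Poly_Mapping.keys m \<subseteq> V"
    and "m1 \<in> A" "\<forall>m'\<in>A. m' \<noteq> m1 \<longrightarrow> lt m' m1"
    and "m2 \<in> A" "\<forall>m'\<in>A. m' \<noteq> m2 \<longrightarrow> lt m' m2"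
  shows "m1 = m2"
proof (rule ccontr)
  assume "m1 \<noteq> m2"
  hence "lt m1 m2" "lt m2 m1" using assms by auto
  thus False using mo_trans[OF mo _ _ _ \<open>lt m1 m2\<close> \<open>lt m2 m1\<close>] mo_irrefl[OF mo] AV assms(3,5) by blast
qed

lemma lm_spec:
  assumes mo: "monomial_order V lt" and p: "p \<in> poly_ring V" "p \<noteq> 0"
  shows "lm lt p \<in> Poly_Mapping.keys p \<and> (\<forall>m'\<in>Poly_Mapping.keys p. m' \<noteq> lm lt p \<longrightarrow> lt m' (lm lt p))"
proof -
  have AV: "\<forall>m\<in>Poly_Mapping.keys p. Poly_Mapping.keys m \<subseteq> V" using p(1) unfolding poly_ring_def by blast
  obtain m where m: "m \<in> Poly_Mapping.keys p" "\<forall>m'\<in>Poly_Mapping.keys p. m' \<noteq> m \<longrightarrow> lt m' m"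
    using lm_exists[OF mo finite_keys _ AV] p(2) by auto
  have "lm lt p = m" unfolding lm_def
    by (rule the_equality) (use m lm_unique[OF mo AV] in blast)+
  thus ?thesis using m by simp
qed

lemma lm_eqI:
  assumes mo: "monomial_order V lt" and p: "p \<in> poly_ring V"
    and "m \<in> Poly_Mapping.keys p" "\<forall>m'\<in>Poly_Mapping.keys p. m' \<noteq> m \<longrightarrow> lt m' m"
  shows "lm lt p = m"
proof -
  have AV: "\<forall>m\<in>Poly_Mapping.keys p. Poly_Mapping.keys m \<subseteq> V" using p(1) unfolding poly_ring_def by blast
  show ?thesis unfolding lm_def
    by (rule the_equality) (use assms lm_unique[OF mo AV] in blast)+
qed

lemma lm_keys: "monomial_order V lt \<Longrightarrow> p \<in> poly_ring V \<Longrightarrow> p \<noteq> 0 \<Longrightarrow> lm lt p \<in> Poly_Mapping.keys p"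
  using lm_spec by blast

lemma lm_subpoly:
  assumes mo: "monomial_order V lt" and p: "p \<in> poly_ring V" "p \<noteq> 0"
    and r: "r \<in> poly_ring V" "Poly_Mapping.keys r \<subseteq> Poly_Mapping.keys p" "lm lt p \<in> Poly_Mapping.keys r"
  shows "lm lt r = lm lt p"
  using lm_spec[OF mo p] r by (intro lm_eqI[OF mo r(1)]) auto

lemma monom_poly_single: "monom_poly m = Poly_Mapping.single m 1"
  by (simp add: monom_poly_def)

lemma lm_single:
  assumes mo: "monomial_order V lt" "Poly_Mapping.keys m \<subseteq> V" "(c::'k::zero) \<noteq> 0"
  shows "lm lt (Poly_Mapping.single m c) = m"
  using assms by (intro lm_eqI[OF mo(1)]) (auto simp: poly_ring_def)

lemma lc_single:
  assumes mo: "monomial_order V lt" "Poly_Mapping.keys m \<subseteq> V" "(c::'k::zero) \<noteq> 0"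
  shows "lc lt (Poly_Mapping.single m c) = c"
  unfolding lc_def lm_single[OF assms] by simp

lemma var_mult: "(var S * var T :: ('v,'k::comm_ring_1) mpoly) =
   Poly_Mapping.single (Poly_Mapping.single S 1 + Poly_Mapping.single T 1) 1"
  by (simp add: var_def monom_poly_def mult_single)

lemma single_mult_monom: "Poly_Mapping.single k c * Poly_Mapping.single a 1 = Poly_Mapping.single (k + a) (c::'k::comm_ring_1)"
  by (simp add: mult_single)

definition md :: "'a set monom \<Rightarrow> 'a \<Rightarrow> nat" where
  "md m i = (\<Sum>S\<in>Poly_Mapping.keys m. if i \<in> S then Poly_Mapping.lookup m S else 0)"

definition deg :: "'v monom \<Rightarrow> nat" where
  "deg m = (\<Sum>S\<in>Poly_Mapping.keys m. Poly_Mapping.lookup m S)"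

definition nonM :: "'a set monom \<Rightarrow> bool" where
  "nonM m \<longleftrightarrow> (\<forall>i. md m i \<le> 1)"

lemma md_add: "md (a + b) i = md a i + md b i"
  unfolding md_def by (rule setsum_keys_plus_distrib) auto

lemma deg_add: "deg (a + b) = deg a + deg b"
  unfolding deg_def by (rule setsum_keys_plus_distrib) auto

lemma md_single: "md (Poly_Mapping.single S 1) i = (if i \<in> S then 1 else 0)"
  unfolding md_def by simp

lemma deg_single: "deg (Poly_Mapping.single S 1) = 1"
  unfolding deg_def by simp

lemma md_zero: "md 0 i = 0" unfolding md_def by simp

lemma deg_zero_iff: "deg k = 0 \<longleftrightarrow> k = 0"
proof
  assume "deg k = 0"
  hence "\<forall>S\<in>Poly_Mapping.keys k. Poly_Mapping.lookup k S = 0" unfolding deg_def by simp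
  hence "\<forall>S. Poly_Mapping.lookup k S = 0" by (metis in_keys_iff)
  thus "k = 0" by (intro poly_mapping_eqI) simp
qed (simp add: deg_def)

lemma not_nonM_add: "\<not> nonM a \<Longrightarrow> \<not> nonM (k + a)"
  unfolding nonM_def using md_add[of k a] by (metis add_leD2)

lemma not_nonM_add2: "\<not> nonM a \<Longrightarrow> \<not> nonM (a + k)"
  using not_nonM_add[of a k] by (simp add: add.commute)

lemma pair_not_nonM:
  assumes "S \<inter> T \<noteq> {}"
  shows "\<not> nonM (Poly_Mapping.single S 1 + Poly_Mapping.single T 1)"
proof -
  obtain x where "x \<in> S" "x \<in> T" using assms by blast
  hence "md (Poly_Mapping.single S 1 + Poly_Mapping.single T 1) x = 2"
    unfolding md_add md_single by simp
  thus ?thesis unfolding nonM_def by (metis one_less_numeral_iff semiring_norm(76) not_le)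
qed

lemma decomp_le:
  assumes "\<And>x. Poly_Mapping.lookup a x \<le> Poly_Mapping.lookup (m::'v monom) x"
  shows "m = (m - a) + a"
  by (rule poly_mapping_eqI) (simp add: lookup_add lookup_minus assms)

lemma M_decomp:
  assumes "Poly_Mapping.keys m \<subseteq> V" "\<not> nonM m"
  shows "\<exists>S T k. S \<in> V \<and> T \<in> V \<and> S \<inter> T \<noteq> {} \<and> m = k + (Poly_Mapping.single S 1 + Poly_Mapping.single T 1)"
proof -
  obtain i where "\<not> md m i \<le> 1" using assms(2) unfolding nonM_def by blast
  hence i: "md m i \<ge> 2" by simp
  define A where "A = {S\<in>Poly_Mapping.keys m. i \<in> S}"
  have mdA: "md m i = (\<Sum>S\<in>A. Poly_Mapping.lookup m S)"
    unfolding md_def A_def by (simp add: sum.inter_filter[symmetric])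
  have finA: "finite A" unfolding A_def by simp
  show ?thesis
  proof (cases "\<exists>S\<in>A. Poly_Mapping.lookup m S \<ge> 2")
    case True
    then obtain S where S: "S \<in> A" "Poly_Mapping.lookup m S \<ge> 2" by blast
    let ?a = "Poly_Mapping.single S 1 + Poly_Mapping.single S (1::nat)"
    have "m = (m - ?a) + ?a"
      by (rule decomp_le) (use S in \<open>auto simp: lookup_add lookup_single when_def\<close>)
    moreover have "S \<in> V" "i \<in> S" using S assms(1) unfolding A_def by auto
    ultimately show ?thesis by blast
  next
    case False
    hence one: "\<forall>S\<in>A. Poly_Mapping.lookup m S = 1" unfolding A_def by (force simp: in_keys_iff)
    hence "md m i = card A" unfolding mdA by simp
    hence "card A \<ge> 2" using i by simp
    then obtain S T where ST: "S \<in> A" "T \<in> A" "S \<noteq> T"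
      by (metis One_nat_def card_le_Suc0_iff_eq not_less_eq_eq numeral_2_eq_2 finA)
    let ?a = "Poly_Mapping.single S 1 + Poly_Mapping.single T (1::nat)"
    have "m = (m - ?a) + ?a"
      by (rule decomp_le) (use ST one in \<open>auto simp: lookup_add lookup_single when_def\<close>)
    moreover have "S \<in> V" "T \<in> V" "i \<in> S" "i \<in> T" using ST assms(1) unfolding A_def by auto
    ultimately show ?thesis by blast
  qed
qed

definition restr :: "('v monom \<Rightarrow> bool) \<Rightarrow> ('v, 'k::zero) mpoly \<Rightarrow> ('v, 'k) mpoly" where
  "restr R p = Abs_poly_mapping (\<lambda>m. if R m then Poly_Mapping.lookup p m else 0)"

lemma lookup_restr: "Poly_Mapping.lookup (restr R p) m = (if R m then Poly_Mapping.lookup p m else 0)"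
proof -
  have "{m. (if R m then Poly_Mapping.lookup p m else 0) \<noteq> 0} \<subseteq> Poly_Mapping.keys p"
  proof
    fix x assume "x \<in> {m. (if R m then Poly_Mapping.lookup p m else 0) \<noteq> 0}"
    thus "x \<in> Poly_Mapping.keys p" by (cases "R x") (auto simp: in_keys_iff)
  qed
  hence "finite {m. (if R m then Poly_Mapping.lookup p m else 0) \<noteq> 0}"
    by (rule finite_subset) simp
  thus ?thesis unfolding restr_def by simp
qed

lemma keys_restr: "Poly_Mapping.keys (restr R p) = {m\<in>Poly_Mapping.keys p. R m}"
  by (auto simp: in_keys_iff lookup_restr split: if_splits)

lemma restr_add: "restr R (p + q) = restr R p + restr R (q::('v,'k::comm_monoid_add) mpoly)"
  by (rule poly_mapping_eqI) (simp add: lookup_restr lookup_add)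

lemma restr_diff: "restr R (p - q) = restr R p - restr R (q::('v,'k::ab_group_add) mpoly)"
  by (rule poly_mapping_eqI) (simp add: lookup_restr lookup_minus)

lemma restr_zero: "restr R 0 = 0"
  by (rule poly_mapping_eqI) (simp add: lookup_restr)

lemma restr_sum: "restr R (sum f A) = (\<Sum>x\<in>A. restr R (f x :: ('v,'k::comm_monoid_add) mpoly))"
  by (induction A rule: infinite_finite_induct) (auto simp: restr_zero restr_add)

lemma restr_poly_ring: "p \<in> poly_ring V \<Longrightarrow> restr R p \<in> poly_ring V"
  unfolding poly_ring_def by (auto simp: keys_restr)

lemma lookup_diff_restr: "Poly_Mapping.lookup (p - restr R p) m = (if R m then 0 else Poly_Mapping.lookup (p::('v,'k::ab_group_add) mpoly) m)"
  by (simp add: lookup_minus lookup_restr)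

lemma keys_diff_restr: "Poly_Mapping.keys (p - restr R p) = {m\<in>Poly_Mapping.keys (p::('v,'k::ab_group_add) mpoly). \<not> R m}"
  by (auto simp: in_keys_iff lookup_diff_restr split: if_splits)

lemma lookup_mult_single_gen:
  fixes f :: "('v, 'k::comm_semiring_1) mpoly" and a k :: "'v monom"
  shows "Poly_Mapping.lookup (f * Poly_Mapping.single a c) k = (\<Sum>l. Poly_Mapping.lookup f l * (c when k = l + a))"
proof -
  have "\<And>l. (\<Sum>q. (c when a = q) when k = l + q) = (c when k = l + a)"
  proof -
    fix l :: "'v monom"
    have "\<And>q::'v monom. ((c when a = q) when k = l + q) = ((c when k = l + a) when a = q)"
      by (simp add: when_def)
    thus "(\<Sum>q. (c when a = q) when k = l + q) = (c when k = l + a)" by simp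
  qed
  thus ?thesis by (simp add: lookup_mult lookup_single)
qed

lemma lookup_mult_single_add:
  fixes f :: "('v, 'k::comm_semiring_1) mpoly" and a l0 :: "'v monom"
  shows "Poly_Mapping.lookup (f * Poly_Mapping.single a c) (l0 + a) = Poly_Mapping.lookup f l0 * c"
proof -
  have "\<And>l. Poly_Mapping.lookup f l * (c when l0 + a = l + a) = (Poly_Mapping.lookup f l * c when l = l0)"
    by (auto simp: when_def)
  thus ?thesis by (simp add: lookup_mult_single_gen)
qed

lemma lookup_mult_single_not:
  fixes f :: "('v, 'k::comm_semiring_1) mpoly" and a k :: "'v monom"
  assumes "\<forall>l. k \<noteq> l + a"
  shows "Poly_Mapping.lookup (f * Poly_Mapping.single a c) k = 0"
  using assms by (simp add: lookup_mult_single_gen)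

lemma restr_mult_single:
  fixes q :: "('v, 'k::comm_semiring_1) mpoly" and a :: "'v monom"
  shows "restr R (q * Poly_Mapping.single a c) = restr (\<lambda>k. R (k + a)) q * Poly_Mapping.single a c"
proof (rule poly_mapping_eqI)
  fix m
  show "Poly_Mapping.lookup (restr R (q * Poly_Mapping.single a c)) m =
        Poly_Mapping.lookup (restr (\<lambda>k. R (k + a)) q * Poly_Mapping.single a c) m"
  proof (cases "\<exists>l. m = l + a")
    case True
    then obtain l where "m = l + a" by blast
    thus ?thesis by (simp add: lookup_restr lookup_mult_single_add)
  next
    case False
    thus ?thesis by (simp add: lookup_restr lookup_mult_single_not)
  qed
qed

lemma deg_single_Suc [simp]: "deg (Poly_Mapping.single S (Suc 0)) = 1"
  using deg_single by simp

lemma stable_finite: "finite (stable_sets d E)"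
  by (rule finite_subset[of _ "Pow {1..d}"]) (auto simp: stable_sets_def)

lemma md_pair_eq:
  assumes "S1 \<inter> S2 = {}" "S3 \<inter> S4 = {}" "S1 \<union> S2 = S3 \<union> S4"
  shows "md (Poly_Mapping.single S1 1 + Poly_Mapping.single S2 1) i = md (Poly_Mapping.single S3 1 + Poly_Mapping.single S4 1) i"
  using assms unfolding md_add md_single by auto

lemma nonM_pair_eq:
  assumes "S1 \<inter> S2 = {}" "S3 \<inter> S4 = {}" "S1 \<union> S2 = S3 \<union> S4"
  shows "nonM (k + (Poly_Mapping.single S1 1 + Poly_Mapping.single S2 1)) = nonM (k + (Poly_Mapping.single S3 1 + Poly_Mapping.single S4 1))"
  by (simp only: nonM_def md_add[of k] md_pair_eq[OF assms])

lemma Jgen_form: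
  assumes "b \<in> (J_gens d E :: (nat set, 'k::comm_ring_1) mpoly set)"
  shows "\<exists>S1 S2 S3 S4. S1 \<in> stable_sets d E \<and> S2 \<in> stable_sets d E \<and> S3 \<in> stable_sets d E \<and> S4 \<in> stable_sets d E \<and>
      S1 \<inter> S2 = {} \<and> S3 \<inter> S4 = {} \<and> S1 \<union> S2 = S3 \<union> S4 \<and>
      b = Poly_Mapping.single (Poly_Mapping.single S1 1 + Poly_Mapping.single S2 1) 1
        - Poly_Mapping.single (Poly_Mapping.single S3 1 + Poly_Mapping.single S4 1) 1"
  using assms unfolding J_gens_def by (auto simp: var_mult)

lemma Mgen_form:
  assumes "b \<in> (M_gens d E :: (nat set, 'k::comm_ring_1) mpoly set)"
  shows "\<exists>S T. S \<in> stable_sets d E \<and> T \<in> stable_sets d E \<and> S \<inter> T \<noteq> {} \<and>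
      b = Poly_Mapping.single (Poly_Mapping.single S 1 + Poly_Mapping.single T 1) 1"
  using assms unfolding M_gens_def by (auto simp: var_mult)

lemma keys_pair_sub: "S \<in> V \<Longrightarrow> T \<in> V \<Longrightarrow> Poly_Mapping.keys (Poly_Mapping.single S (1::nat) + Poly_Mapping.single T 1) \<subseteq> V"
  by (simp add: keys_add_mon)

lemma Jgens_poly_ring: "(J_gens d E :: (nat set, 'k::comm_ring_1) mpoly set) \<subseteq> poly_ring (stable_sets d E)"
proof
  fix b :: "(nat set, 'k) mpoly" assume "b \<in> J_gens d E"
  then obtain S1 S2 S3 S4 where S: "S1 \<in> stable_sets d E" "S2 \<in> stable_sets d E" "S3 \<in> stable_sets d E" "S4 \<in> stable_sets d E"
    "b = Poly_Mapping.single (Poly_Mapping.single S1 1 + Poly_Mapping.single S2 1) 1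
        - Poly_Mapping.single (Poly_Mapping.single S3 1 + Poly_Mapping.single S4 1) 1"
    using Jgen_form by blast
  show "b \<in> poly_ring (stable_sets d E)" unfolding S(5)
    by (intro poly_ring_diff poly_ring_single keys_pair_sub S)
qed

lemma Mgens_poly_ring: "(M_gens d E :: (nat set, 'k::comm_ring_1) mpoly set) \<subseteq> poly_ring (stable_sets d E)"
proof
  fix b :: "(nat set, 'k) mpoly" assume "b \<in> M_gens d E"
  then obtain S T where S: "S \<in> stable_sets d E" "T \<in> stable_sets d E"
    "b = Poly_Mapping.single (Poly_Mapping.single S 1 + Poly_Mapping.single T 1) 1"
    using Mgen_form by blast
  show "b \<in> poly_ring (stable_sets d E)" unfolding S(3)
    by (intro poly_ring_single keys_pair_sub S)
qed

lemma J_poly_ring: "(J_ideal d E :: (nat set, 'k::comm_ring_1) mpoly set) \<subseteq> poly_ring (stable_sets d E)"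
  unfolding J_ideal_def by (rule ig_poly_ring[OF Jgens_poly_ring])

lemma K_poly_ring: "(K_ideal d E :: (nat set, 'k::comm_ring_1) mpoly set) \<subseteq> poly_ring (stable_sets d E)"
  unfolding K_ideal_def by (rule ig_poly_ring) (use Jgens_poly_ring Mgens_poly_ring in blast)

lemma J_sub_K: "(J_ideal d E :: (nat set, 'k::comm_ring_1) mpoly set) \<subseteq> K_ideal d E"
  unfolding J_ideal_def K_ideal_def by (rule ig_mono) blast

lemma Mgens_sub_K: "(M_gens d E :: (nat set, 'k::comm_ring_1) mpoly set) \<subseteq> K_ideal d E"
  unfolding K_ideal_def by (auto intro: ig_gen)

lemma Mgens_sub_M: "(M_gens d E :: (nat set, 'k::comm_ring_1) mpoly set) \<subseteq> M_ideal d E"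
  unfolding M_ideal_def by (auto intro: ig_gen)

lemma restr_Jgen:
  assumes "b \<in> (J_gens d E :: (nat set, 'k::comm_ring_1) mpoly set)" "q \<in> poly_ring (stable_sets d E)"
  shows "\<exists>q'. q' \<in> poly_ring (stable_sets d E) \<and> restr nonM (q * b) = q' * b"
proof -
  obtain S1 S2 S3 S4 where S: "S1 \<inter> S2 = {}" "S3 \<inter> S4 = {}" "S1 \<union> S2 = S3 \<union> S4"
    "b = Poly_Mapping.single (Poly_Mapping.single S1 1 + Poly_Mapping.single S2 1) 1
        - Poly_Mapping.single (Poly_Mapping.single S3 1 + Poly_Mapping.single S4 1) 1"
    using Jgen_form[OF assms(1)] by blast
  define a1 where "a1 = Poly_Mapping.single S1 1 + Poly_Mapping.single S2 (1::nat)"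
  define a2 where "a2 = Poly_Mapping.single S3 1 + Poly_Mapping.single S4 (1::nat)"
  have eq: "(\<lambda>k. nonM (k + a2)) = (\<lambda>k. nonM (k + a1))"
    unfolding a1_def a2_def using nonM_pair_eq[OF S(1-3)] by simp
  have b: "b = Poly_Mapping.single a1 1 - Poly_Mapping.single a2 1"
    unfolding S(4) a1_def a2_def ..
  have "restr nonM (q * b) = restr nonM (q * Poly_Mapping.single a1 1) - restr nonM (q * Poly_Mapping.single a2 1)"
    unfolding b right_diff_distrib restr_diff ..
  also have "\<dots> = restr (\<lambda>k. nonM (k + a1)) q * Poly_Mapping.single a1 1 - restr (\<lambda>k. nonM (k + a2)) q * Poly_Mapping.single a2 1"
    unfolding restr_mult_single ..
  also have "\<dots> = restr (\<lambda>k. nonM (k + a1)) q * b"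
    unfolding eq b right_diff_distrib ..
  finally show ?thesis using restr_poly_ring[OF assms(2)] by blast
qed

lemma restr_J:
  assumes "p \<in> (J_ideal d E :: (nat set, 'k::comm_ring_1) mpoly set)"
  shows "restr nonM p \<in> J_ideal d E"
proof -
  obtain F q where 1: "p = (\<Sum>b\<in>F. q b * b)" "finite F" "F \<subseteq> J_gens d E" "\<forall>b\<in>F. q b \<in> poly_ring (stable_sets d E)"
    using assms unfolding J_ideal_def ideal_gen_def by blast
  have "\<forall>b\<in>F. \<exists>q'. q' \<in> poly_ring (stable_sets d E) \<and> restr nonM (q b * b) = q' * b"
    using restr_Jgen 1 by blast
  then obtain Q where Q: "\<forall>b\<in>F. Q b \<in> poly_ring (stable_sets d E) \<and> restr nonM (q b * b) = Q b * b"
    by metis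
  have "restr nonM p = (\<Sum>b\<in>F. Q b * b)"
    unfolding 1(1) restr_sum using Q by (intro sum.cong) auto
  thus ?thesis unfolding J_ideal_def ideal_gen_def using 1 Q by blast
qed

lemma deg_pair: "deg (Poly_Mapping.single S 1 + Poly_Mapping.single T (1::nat)) = 2"
  unfolding deg_add deg_single by simp

lemma keys_J_deg:
  assumes "p \<in> (J_ideal d E :: (nat set, 'k::comm_ring_1) mpoly set)" "m \<in> Poly_Mapping.keys p"
  shows "deg m \<ge> 2"
proof -
  obtain F q where 1: "p = (\<Sum>b\<in>F. q b * b)" "finite F" "F \<subseteq> J_gens d E"
    using assms unfolding J_ideal_def ideal_gen_def by blast
  have "m \<in> (\<Union>b\<in>F. Poly_Mapping.keys (q b * b))"
    using assms(2) keys_sum[of "\<lambda>b. q b * b" F] unfolding 1(1) by (rule subsetD[rotated])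
  then obtain b where b: "b \<in> F" "m \<in> Poly_Mapping.keys (q b * b)" by blast
  have bJ: "b \<in> J_gens d E" using b(1) 1(3) by (rule subsetD[rotated])
  obtain S1 S2 S3 S4 where S: 
    "b = Poly_Mapping.single (Poly_Mapping.single S1 1 + Poly_Mapping.single S2 1) 1
        - Poly_Mapping.single (Poly_Mapping.single S3 1 + Poly_Mapping.single S4 1) 1"
    using Jgen_form[OF bJ] by (elim exE conjE)
  have "m \<in> {x + y | x y. x \<in> Poly_Mapping.keys (q b) \<and> y \<in> Poly_Mapping.keys b}"
    using b(2) keys_mult[of "q b" b] by (rule subsetD[rotated])
  then obtain x y where xy: "m = x + y" "y \<in> Poly_Mapping.keys b" by blast
  have "y \<in> Poly_Mapping.keys (Poly_Mapping.single (Poly_Mapping.single S1 1 + Poly_Mapping.single S2 1) (1::'k))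
      \<union> Poly_Mapping.keys (Poly_Mapping.single (Poly_Mapping.single S3 1 + Poly_Mapping.single S4 1) (1::'k))"
    using xy(2) keys_diff unfolding S by (rule subsetD[rotated])
  hence "y = Poly_Mapping.single S1 1 + Poly_Mapping.single S2 1 \<or> y = Poly_Mapping.single S3 1 + Poly_Mapping.single S4 1"
    by (simp only: keys_single if_False one_neq_zero Un_iff singleton_iff)
  hence "deg y = 2" using deg_pair by metis
  thus ?thesis using xy(1) deg_add[of x y] by simp
qed

lemma Mgen_single:
  assumes "b \<in> (M_gens d E :: (nat set, 'k::comm_ring_1) mpoly set)"
  shows "\<exists>a. b = Poly_Mapping.single a 1 \<and> \<not> nonM a"
proof -
  from assms obtain S T where ST: "S \<inter> T \<noteq> {}" "b = var S * var T" unfolding M_gens_def by blast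
  have "b = Poly_Mapping.single (Poly_Mapping.single S 1 + Poly_Mapping.single T 1) 1 \<and>
        \<not> nonM (Poly_Mapping.single S 1 + Poly_Mapping.single T (1::nat))"
    using ST(2) pair_not_nonM[OF ST(1)] by (simp only: var_mult simp_thms)
  thus ?thesis by (rule exI)
qed

lemma keys_M:
  assumes "p \<in> (M_ideal d E :: (nat set, 'k::comm_ring_1) mpoly set)" "m \<in> Poly_Mapping.keys p"
  shows "\<not> nonM m"
proof -
  have "\<exists>a k. \<not> nonM a \<and> m = k + a"
    by (rule keys_ideal_monomial[OF assms(1)[unfolded M_ideal_def] Mgen_single assms(2)])
  thus ?thesis using not_nonM_add by blast
qed

lemma poly_expand: "p = (\<Sum>m\<in>Poly_Mapping.keys p. Poly_Mapping.single m (Poly_Mapping.lookup p m))"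
proof (rule poly_mapping_eqI)
  fix x
  show "Poly_Mapping.lookup p x = Poly_Mapping.lookup (\<Sum>m\<in>Poly_Mapping.keys p. Poly_Mapping.single m (Poly_Mapping.lookup p m)) x"
    by (simp add: lookup_sum lookup_single when_def in_keys_iff)
qed

lemma M_of_keys:
  assumes "p \<in> poly_ring (stable_sets d E)" "\<forall>m\<in>Poly_Mapping.keys p. \<not> nonM m"
  shows "(p :: (nat set, 'k::comm_ring_1) mpoly) \<in> M_ideal d E"
proof -
  have "(\<Sum>m\<in>Poly_Mapping.keys p. Poly_Mapping.single m (Poly_Mapping.lookup p m)) \<in> M_ideal d E"
  proof (rule ig_sum[of _ _ "stable_sets d E" "M_gens d E", folded M_ideal_def])
    fix m assume m: "m \<in> Poly_Mapping.keys p"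
    have km: "Poly_Mapping.keys m \<subseteq> stable_sets d E" using assms(1) m unfolding poly_ring_def by blast
    obtain S T k where S: "S \<in> stable_sets d E" "T \<in> stable_sets d E" "S \<inter> T \<noteq> {}"
      "m = k + (Poly_Mapping.single S 1 + Poly_Mapping.single T 1)"
      using M_decomp[OF km] assms(2) m by blast
    have kk: "Poly_Mapping.keys k \<subseteq> stable_sets d E" using km S(4) by (simp add: keys_add_mon)
    have "Poly_Mapping.single m (Poly_Mapping.lookup p m) = Poly_Mapping.single k (Poly_Mapping.lookup p m) * (var S * var T)"
      unfolding var_mult single_mult_monom S(4) ..
    moreover have "var S * var T \<in> (M_ideal d E :: (nat set, 'k) mpoly set)"
      unfolding M_ideal_def M_gens_def by (rule ig_gen) (use S in blast)
    ultimately show "Poly_Mapping.single m (Poly_Mapping.lookup p m) \<in> M_ideal d E"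
      using ig_mult[OF _ poly_ring_single[OF kk]] unfolding M_ideal_def by metis
  qed simp
  thus ?thesis using poly_expand[of p] by simp
qed

lemma mon_ideal_div:
  assumes "(monom_poly m :: ('v, 'k::comm_ring_1) mpoly) \<in> ideal_gen V {monom_poly (lm lt h) | h. h \<in> X \<and> h \<noteq> 0}"
  shows "\<exists>h k. h \<in> X \<and> h \<noteq> 0 \<and> m = k + lm lt h"
proof -
  have "m \<in> Poly_Mapping.keys (monom_poly m :: ('v, 'k) mpoly)" by (simp add: monom_poly_def)
  have "\<exists>a k. (\<exists>h. h \<in> X \<and> h \<noteq> 0 \<and> a = lm lt h) \<and> m = k + a"
    using assms _ \<open>m \<in> _\<close>
  proof (rule keys_ideal_monomial)
    fix b assume "b \<in> {monom_poly (lm lt h) :: ('v, 'k) mpoly | h. h \<in> X \<and> h \<noteq> 0}"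
    thus "\<exists>a. b = Poly_Mapping.single a 1 \<and> (\<exists>h. h \<in> X \<and> h \<noteq> 0 \<and> a = lm lt h)"
      by (auto simp: monom_poly_def)
  qed
  thus ?thesis by blast
qed

lemma mon_ideal_mem:
  fixes X :: "('v, 'a::zero) mpoly set"
  assumes "h \<in> X" "h \<noteq> 0" "Poly_Mapping.keys k \<subseteq> V"
  shows "(monom_poly (k + lm lt h) :: ('v, 'k::comm_ring_1) mpoly) \<in> ideal_gen V {monom_poly (lm lt h) | h. h \<in> X \<and> h \<noteq> 0}"
proof -
  have eq: "monom_poly (k + lm lt h) = Poly_Mapping.single k 1 * (monom_poly (lm lt h) :: ('v, 'k) mpoly)"
    by (simp add: monom_poly_def single_mult_monom)
  have mem: "(monom_poly (lm lt h) :: ('v, 'k) mpoly) \<in> {monom_poly (lm lt h) | h. h \<in> X \<and> h \<noteq> 0}"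
    using assms(1,2) by blast
  have "Poly_Mapping.single k 1 * (monom_poly (lm lt h) :: ('v, 'k) mpoly) \<in> ideal_gen V {monom_poly (lm lt h) | h. h \<in> X \<and> h \<noteq> 0}"
    by (rule ig_mult[OF ig_gen[OF mem] poly_ring_single[OF assms(3)]])
  thus ?thesis unfolding eq .
qed

lemma rgb_parts:
  fixes Gb :: "('v, 'k::comm_ring_1) mpoly set"
  assumes "reduced_groebner_basis V lt I Gb"
  shows "finite Gb" "Gb \<subseteq> I"
    "ideal_gen V {monom_poly (lm lt g) | g. g \<in> Gb \<and> g \<noteq> 0} = initial_ideal V lt I"
    "\<And>g. g \<in> Gb \<Longrightarrow> g \<noteq> 0"
    "\<And>g. g \<in> Gb \<Longrightarrow> lc lt g = 1"
    "\<And>g m. g \<in> Gb \<Longrightarrow> m \<in> Poly_Mapping.keys g \<Longrightarrow> (monom_poly m :: ('v, 'k::comm_ring_1) mpoly) \<notin> ideal_gen V {monom_poly (lm lt h) | h. h \<in> Gb - {g} \<and> h \<noteq> 0}"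
proof -
  have gb: "groebner_basis V lt I Gb" using assms[unfolded reduced_groebner_basis_def] by (rule conjunct1)
  have rd: "\<forall>g \<in> Gb. g \<noteq> 0 \<and> lc lt g = 1 \<and>
        (\<forall>m \<in> Poly_Mapping.keys g. (monom_poly m :: ('v, 'k) mpoly) \<notin> ideal_gen V {monom_poly (lm lt h) | h. h \<in> Gb - {g} \<and> h \<noteq> 0})"
    using assms[unfolded reduced_groebner_basis_def] by (rule conjunct2)
  have g3: "finite Gb \<and> Gb \<subseteq> I \<and> ideal_gen V {monom_poly (lm lt g) | g. g \<in> Gb \<and> g \<noteq> 0} = initial_ideal V lt I"
    using gb unfolding groebner_basis_def .
  show "finite Gb" using g3 by (rule conjunct1)
  show "Gb \<subseteq> I" using g3 by (rule conjunct1[OF conjunct2])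
  show "ideal_gen V {monom_poly (lm lt g) | g. g \<in> Gb \<and> g \<noteq> 0} = initial_ideal V lt I"
    using g3 by (rule conjunct2[OF conjunct2])
  fix g assume g: "g \<in> Gb"
  note rg = bspec[OF rd g]
  show "g \<noteq> 0" using rg by (rule conjunct1)
  show "lc lt g = 1" using rg by (rule conjunct1[OF conjunct2])
  fix m assume "m \<in> Poly_Mapping.keys g"
  thus "(monom_poly m :: ('v, 'k) mpoly) \<notin> ideal_gen V {monom_poly (lm lt h) | h. h \<in> Gb - {g} \<and> h \<noteq> 0}"
    using conjunct2[OF conjunct2[OF rg]] by blast
qed

lemma G1_dich:
  fixes G1 :: "(nat set, 'k::field) mpoly set"
  assumes mo: "monomial_order (stable_sets d E) lt"
    and rg: "reduced_groebner_basis (stable_sets d E) lt (J_ideal d E) G1"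
    and g: "g \<in> G1"
  shows "(\<forall>m\<in>Poly_Mapping.keys g. nonM m) \<or> (\<forall>m\<in>Poly_Mapping.keys g. \<not> nonM m)"
proof (rule ccontr)
  let ?V = "stable_sets d E"
  assume "\<not> ?thesis"
  then obtain m1 m2 where m: "m1 \<in> Poly_Mapping.keys g" "nonM m1" "m2 \<in> Poly_Mapping.keys g" "\<not> nonM m2"
    by blast
  note G1J = rgb_parts(2)[OF rg] and eq1 = rgb_parts(3)[OF rg]
  have red: "g \<noteq> 0" "\<forall>m\<in>Poly_Mapping.keys g. (monom_poly m :: (nat set, 'k) mpoly) \<notin> ideal_gen ?V {monom_poly (lm lt h) | h. h \<in> G1 - {g} \<and> h \<noteq> 0}"
    using rgb_parts(4,6)[OF rg g] by blast+
  have gJ: "g \<in> J_ideal d E" using g G1J by blast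
  have gP: "g \<in> poly_ring ?V" using gJ J_poly_ring by blast
  have claim: False if r: "r \<in> J_ideal d E" "r \<noteq> 0" "Poly_Mapping.keys r \<subseteq> Poly_Mapping.keys g" "lm lt g \<notin> Poly_Mapping.keys r" for r :: "(nat set, 'k) mpoly"
  proof -
    have rP: "r \<in> poly_ring ?V" using r(1) J_poly_ring by blast
    have lr: "lm lt r \<in> Poly_Mapping.keys r" using lm_keys[OF mo rP r(2)] .
    hence lrg: "lm lt r \<in> Poly_Mapping.keys g" using r(3) by blast
    have klr: "Poly_Mapping.keys (lm lt r) \<subseteq> ?V" using rP lr unfolding poly_ring_def by blast
    have "(monom_poly (lm lt r) :: (nat set, 'k) mpoly) \<in> initial_ideal ?V lt (J_ideal d E)"
      unfolding initial_ideal_def by (rule ig_gen) (use r in blast)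
    hence "(monom_poly (lm lt r) :: (nat set, 'k) mpoly) \<in> ideal_gen ?V {monom_poly (lm lt h) | h. h \<in> G1 \<and> h \<noteq> 0}"
      using eq1 by simp
    then obtain h k where hk: "h \<in> G1" "h \<noteq> 0" "lm lt r = k + lm lt h"
      using mon_ideal_div by blast
    have kk: "Poly_Mapping.keys k \<subseteq> ?V" using klr hk(3) by (simp add: keys_add_mon)
    show False
    proof (cases "h = g")
      case True
      have "lm lt r \<noteq> lm lt g" using lr r(4) by metis
      hence "lt (lm lt r) (lm lt g)" using lm_spec[OF mo gP red(1)] lrg by blast
      moreover have "\<not> lt (lm lt r) (lm lt g)"
        by (rule mo_div_not_lt[OF mo klr]) (use hk(3) True in \<open>simp add: add.commute\<close>)
      ultimately show False by blast
    next
      case False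
      have "(monom_poly (k + lm lt h) :: (nat set, 'k) mpoly) \<in> ideal_gen ?V {monom_poly (lm lt h) | h. h \<in> G1 - {g} \<and> h \<noteq> 0}"
        by (rule mon_ideal_mem) (use hk False kk in auto)
      thus False using red(2) lrg hk(3) by simp
    qed
  qed
  let ?r1 = "restr nonM g" and ?r2 = "g - restr nonM g"
  have r1J: "?r1 \<in> J_ideal d E" using restr_J[OF gJ] .
  have r2J: "?r2 \<in> J_ideal d E" using ig_diff[OF gJ[unfolded J_ideal_def] r1J[unfolded J_ideal_def]]
    unfolding J_ideal_def .
  have k1: "Poly_Mapping.keys ?r1 = {m\<in>Poly_Mapping.keys g. nonM m}" by (rule keys_restr)
  have k2: "Poly_Mapping.keys ?r2 = {m\<in>Poly_Mapping.keys g. \<not> nonM m}" by (rule keys_diff_restr)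
  have r1: "?r1 \<noteq> 0" using k1 m(1,2) by fastforce
  have r2: "?r2 \<noteq> 0" using k2 m(3,4) by fastforce
  show False
  proof (cases "nonM (lm lt g)")
    case True
    show False by (rule claim[OF r2J r2]) (use k2 True in auto)
  next
    case False
    show False by (rule claim[OF r1J r1]) (use k1 False in auto)
  qed
qed

lemma G1_notM:
  fixes G1 :: "(nat set, 'k::field) mpoly set"
  assumes mo: "monomial_order (stable_sets d E) lt"
    and rg: "reduced_groebner_basis (stable_sets d E) lt (J_ideal d E) G1"
    and g: "g \<in> G1" "g \<notin> M_ideal d E"
  shows "\<forall>m\<in>Poly_Mapping.keys g. nonM m"
proof -
  note G1J = rgb_parts(2)[OF rg]
  have gP: "g \<in> poly_ring (stable_sets d E)" using g G1J J_poly_ring by blast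
  show ?thesis using G1_dich[OF mo rg g(1)] M_of_keys[OF gP] g(2) by blast
qed

lemma Mgens_finite: "finite (M_gens d E :: (nat set, 'k::comm_ring_1) mpoly set)"
proof (rule finite_subset)
  show "(M_gens d E :: (nat set, 'k) mpoly set) \<subseteq> (\<lambda>(S, T). var S * var T) ` (stable_sets d E \<times> stable_sets d E)"
    unfolding M_gens_def by auto
  show "finite ((\<lambda>(S, T). var S * var T :: (nat set, 'k) mpoly) ` (stable_sets d E \<times> stable_sets d E))"
    using stable_finite by simp
qed

lemma single_one_nz: "Poly_Mapping.single a (1::'k::zero_neq_one) \<noteq> 0"
  by (metis lookup_single_eq lookup_zero zero_neq_one)

lemma restr_M_zero:
  assumes "mm \<in> (M_ideal d E :: (nat set, 'k::comm_ring_1) mpoly set)"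
  shows "restr nonM mm = 0"
proof (rule poly_mapping_eqI)
  fix x
  show "Poly_Mapping.lookup (restr nonM mm) x = Poly_Mapping.lookup 0 x"
  proof (cases "x \<in> Poly_Mapping.keys mm")
    case True
    hence "\<not> nonM x" using keys_M[OF assms] by blast
    thus ?thesis by (simp add: lookup_restr)
  next
    case False
    thus ?thesis by (simp add: lookup_restr in_keys_iff)
  qed
qed

lemma main_aux:
  fixes G1 G :: "(nat set, 'k::field) mpoly set"
  assumes mo: "monomial_order (stable_sets d E) lt"
    and rg: "reduced_groebner_basis (stable_sets d E) lt (J_ideal d E) G1"
    and G_def: "G = (G1 - M_ideal d E) \<union> M_gens d E"
  shows "reduced_groebner_basis (stable_sets d E) lt (K_ideal d E) G"
proof -
  let ?V = "stable_sets d E"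
  note G1fin = rgb_parts(1)[OF rg] and G1J = rgb_parts(2)[OF rg] and eq1 = rgb_parts(3)[OF rg]
  note G1nz = rgb_parts(4)[OF rg] and G1lc = rgb_parts(5)[OF rg] and G1red = rgb_parts(6)[OF rg]
  have finG: "finite G" unfolding G_def using G1fin Mgens_finite by blast
  have GK: "G \<subseteq> K_ideal d E" unfolding G_def using G1J J_sub_K Mgens_sub_K by blast
  have GP: "G \<subseteq> poly_ring ?V" using GK K_poly_ring by blast
  have Mform: "\<exists>S T. S \<in> ?V \<and> T \<in> ?V \<and> S \<inter> T \<noteq> {} \<and> lm lt g = Poly_Mapping.single S 1 + Poly_Mapping.single T 1
      \<and> g = Poly_Mapping.single (Poly_Mapping.single S 1 + Poly_Mapping.single T 1) 1" if g: "g \<in> M_gens d E" for g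
  proof -
    obtain S T where S: "S \<in> ?V" "T \<in> ?V" "S \<inter> T \<noteq> {}"
      "g = Poly_Mapping.single (Poly_Mapping.single S 1 + Poly_Mapping.single T 1) 1"
      using Mgen_form[OF g] by blast
    have "lm lt g = Poly_Mapping.single S 1 + Poly_Mapping.single T 1"
      unfolding S(4) by (rule lm_single[OF mo keys_pair_sub[OF S(1,2)]]) simp
    thus ?thesis using S by blast
  qed
  have Gequiv: "ideal_gen ?V {monom_poly (lm lt g) | g. g \<in> G \<and> g \<noteq> 0} = initial_ideal ?V lt (K_ideal d E :: (nat set, 'k) mpoly set)"
  proof
    show "ideal_gen ?V {monom_poly (lm lt g) | g. g \<in> G \<and> g \<noteq> 0} \<subseteq> initial_ideal ?V lt (K_ideal d E :: (nat set, 'k) mpoly set)"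
      unfolding initial_ideal_def by (rule ig_mono) (use GK in blast)
  next
    show "initial_ideal ?V lt (K_ideal d E :: (nat set, 'k) mpoly set) \<subseteq> ideal_gen ?V {monom_poly (lm lt g) | g. g \<in> G \<and> g \<noteq> 0}"
      unfolding initial_ideal_def
    proof (rule ig_subset, rule subsetI)
      fix x :: "(nat set, 'k) mpoly" assume "x \<in> {monom_poly (lm lt p) | p. p \<in> (K_ideal d E :: (nat set, 'k) mpoly set) \<and> p \<noteq> 0}"
      then obtain p :: "(nat set, 'k) mpoly" where p: "x = monom_poly (lm lt p)" "p \<in> K_ideal d E" "p \<noteq> 0" by blast
      have pP: "p \<in> poly_ring ?V" using p(2) K_poly_ring by blast
      have lp: "lm lt p \<in> Poly_Mapping.keys p" using lm_keys[OF mo pP p(3)] .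
      have klp: "Poly_Mapping.keys (lm lt p) \<subseteq> ?V" using pP lp unfolding poly_ring_def by blast
      show "x \<in> ideal_gen ?V {monom_poly (lm lt g) | g. g \<in> G \<and> g \<noteq> 0}"
      proof (cases "nonM (lm lt p)")
        case False
        obtain S T k where S: "S \<in> ?V" "T \<in> ?V" "S \<inter> T \<noteq> {}"
          "lm lt p = k + (Poly_Mapping.single S 1 + Poly_Mapping.single T 1)"
          using M_decomp[OF klp False] by blast
        let ?g = "var S * var T :: (nat set, 'k) mpoly"
        have gM: "?g \<in> M_gens d E" unfolding M_gens_def using S by blast
        have lg: "lm lt ?g = Poly_Mapping.single S 1 + Poly_Mapping.single T 1"
          unfolding var_mult by (rule lm_single[OF mo keys_pair_sub[OF S(1,2)]]) simp
        have gnz: "?g \<noteq> 0" unfolding var_mult by (rule single_one_nz)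
        have kk: "Poly_Mapping.keys k \<subseteq> ?V" using klp S(4) by (simp add: keys_add_mon)
        have "(monom_poly (k + lm lt ?g) :: (nat set, 'k) mpoly) \<in> ideal_gen ?V {monom_poly (lm lt g) | g. g \<in> G \<and> g \<noteq> 0}"
          by (rule mon_ideal_mem) (use gM gnz kk G_def in auto)
        thus ?thesis using p(1) S(4) lg by simp
      next
        case True
        obtain j mm where jm: "j \<in> ideal_gen ?V (J_gens d E)" "mm \<in> ideal_gen ?V (M_gens d E)" "p = j + mm"
          using ig_union[OF p(2)[unfolded K_ideal_def]] by blast
        have jJ: "j \<in> J_ideal d E" using jm(1) unfolding J_ideal_def .
        have mM: "mm \<in> M_ideal d E" using jm(2) unfolding M_ideal_def .
        define r where "r = restr nonM p"
        have r_eq: "r = restr nonM j" unfolding r_def jm(3) restr_add restr_M_zero[OF mM] by simp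
        have rJ: "r \<in> J_ideal d E" unfolding r_eq by (rule restr_J[OF jJ])
        have rP: "r \<in> poly_ring ?V" using rJ J_poly_ring by blast
        have kr: "Poly_Mapping.keys r = {m\<in>Poly_Mapping.keys p. nonM m}" unfolding r_def by (rule keys_restr)
        have lpr: "lm lt p \<in> Poly_Mapping.keys r" using kr lp True by blast
        have rnz: "r \<noteq> 0" using lpr by auto
        have lr: "lm lt r = lm lt p" by (rule lm_subpoly[OF mo pP p(3) rP]) (use kr lpr in auto)
        have "(monom_poly (lm lt r) :: (nat set, 'k) mpoly) \<in> initial_ideal ?V lt (J_ideal d E)"
          unfolding initial_ideal_def by (rule ig_gen) (use rJ rnz in blast)
        hence "(monom_poly (lm lt p) :: (nat set, 'k) mpoly) \<in> ideal_gen ?V {monom_poly (lm lt h) | h. h \<in> G1 \<and> h \<noteq> 0}"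
          using eq1 lr by simp
        then obtain h k where hk: "h \<in> G1" "h \<noteq> 0" "lm lt p = k + lm lt h"
          using mon_ideal_div by blast
        have kk: "Poly_Mapping.keys k \<subseteq> ?V" using klp hk(3) by (simp add: keys_add_mon)
        have hM: "h \<notin> M_ideal d E"
        proof
          assume hM: "h \<in> M_ideal d E"
          have hP: "h \<in> poly_ring ?V" using hk(1) G1J J_poly_ring by blast
          have "\<not> nonM (lm lt h)" using keys_M[OF hM lm_keys[OF mo hP hk(2)]] .
          hence "\<not> nonM (lm lt p)" using hk(3) not_nonM_add by simp
          thus False using True by simp
        qed
        have "(monom_poly (k + lm lt h) :: (nat set, 'k) mpoly) \<in> ideal_gen ?V {monom_poly (lm lt g) | g. g \<in> G \<and> g \<noteq> 0}"
          by (rule mon_ideal_mem) (use hk hM kk G_def in auto)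
        thus ?thesis using p(1) hk(3) by simp
      qed
    qed
  qed
  have red: "g \<noteq> 0 \<and> lc lt g = 1 \<and>
        (\<forall>m \<in> Poly_Mapping.keys g. (monom_poly m :: (nat set, 'k) mpoly) \<notin> ideal_gen ?V {monom_poly (lm lt h) | h. h \<in> G - {g} \<and> h \<noteq> 0})"
    if g: "g \<in> G" for g
  proof (cases "g \<in> M_gens d E")
    case True
    obtain S T where S: "S \<in> ?V" "T \<in> ?V" "S \<inter> T \<noteq> {}" "lm lt g = Poly_Mapping.single S 1 + Poly_Mapping.single T 1"
      "g = Poly_Mapping.single (Poly_Mapping.single S 1 + Poly_Mapping.single T 1) 1"
      using Mform[OF True] by blast
    let ?a = "Poly_Mapping.single S 1 + Poly_Mapping.single T (1::nat)"
    have gnz: "g \<noteq> 0" unfolding S(5) by (rule single_one_nz)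
    have lc: "lc lt g = 1" unfolding S(5) by (rule lc_single[OF mo keys_pair_sub[OF S(1,2)]]) simp
    have kg: "Poly_Mapping.keys g = {?a}" using S(5) by simp
    have "(monom_poly ?a :: (nat set, 'k) mpoly) \<notin> ideal_gen ?V {monom_poly (lm lt h) | h. h \<in> G - {g} \<and> h \<noteq> 0}"
    proof
      assume "(monom_poly ?a :: (nat set, 'k) mpoly) \<in> ideal_gen ?V {monom_poly (lm lt h) | h. h \<in> G - {g} \<and> h \<noteq> 0}"
      then obtain h k where hk: "h \<in> G - {g}" "h \<noteq> 0" "?a = k + lm lt h"
        using mon_ideal_div by blast
      have dega: "deg ?a = 2" by (rule deg_pair)
      show False
      proof (cases "h \<in> M_gens d E")
        case True
        obtain S' T' where S': "lm lt h = Poly_Mapping.single S' 1 + Poly_Mapping.single T' 1"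
          "h = Poly_Mapping.single (Poly_Mapping.single S' 1 + Poly_Mapping.single T' 1) 1"
          using Mform[OF True] by blast
        have "deg k + 2 = 2" using dega hk(3) S'(1) deg_add[of k "lm lt h"] deg_pair[of S' T'] by simp
        hence "deg k = 0" by simp
        hence "k = 0" by (rule deg_zero_iff[THEN iffD1])
        hence "h = g" using hk(3) S'(1,2) S(5) by simp
        thus False using hk(1) by blast
      next
        case False
        hence hG1: "h \<in> G1" "h \<notin> M_ideal d E" using hk(1) G_def by auto
        have hJ: "h \<in> J_ideal d E" using hG1 G1J by blast
        have hP: "h \<in> poly_ring ?V" using hJ J_poly_ring by blast
        have lh: "lm lt h \<in> Poly_Mapping.keys h" using lm_keys[OF mo hP hk(2)] .
        have "deg (lm lt h) \<ge> 2" using keys_J_deg[OF hJ lh] .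
        hence "deg k = 0" using dega hk(3) deg_add[of k "lm lt h"] by simp
        hence "k = 0" by (rule deg_zero_iff[THEN iffD1])
        hence "lm lt h = ?a" using hk(3) by simp
        moreover have "nonM (lm lt h)" using G1_notM[OF mo rg hG1] lh by blast
        ultimately show False using pair_not_nonM[OF S(3)] by simp
      qed
    qed
    thus ?thesis using gnz lc kg by simp
  next
    case False
    hence gG1: "g \<in> G1" "g \<notin> M_ideal d E" using g G_def by auto
    have gP: "g \<in> poly_ring ?V" using gG1 G1J J_poly_ring by blast
    have nm: "\<forall>m\<in>Poly_Mapping.keys g. nonM m" using G1_notM[OF mo rg gG1] .
    have "(monom_poly m :: (nat set, 'k) mpoly) \<notin> ideal_gen ?V {monom_poly (lm lt h) | h. h \<in> G - {g} \<and> h \<noteq> 0}"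
      if m: "m \<in> Poly_Mapping.keys g" for m
    proof
      assume "(monom_poly m :: (nat set, 'k) mpoly) \<in> ideal_gen ?V {monom_poly (lm lt h) | h. h \<in> G - {g} \<and> h \<noteq> 0}"
      then obtain h k where hk: "h \<in> G - {g}" "h \<noteq> 0" "m = k + lm lt h"
        using mon_ideal_div by blast
      have km: "Poly_Mapping.keys m \<subseteq> ?V" using gP m unfolding poly_ring_def by blast
      have kk: "Poly_Mapping.keys k \<subseteq> ?V" using km hk(3) by (simp add: keys_add_mon)
      show False
      proof (cases "h \<in> M_gens d E")
        case True
        have hM: "h \<in> M_ideal d E" using True Mgens_sub_M by blast
        have hP: "h \<in> poly_ring ?V" using True Mgens_poly_ring by blast
        have "\<not> nonM (lm lt h)" using keys_M[OF hM lm_keys[OF mo hP hk(2)]] .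
        hence "\<not> nonM m" using hk(3) not_nonM_add by simp
        thus False using nm m by blast
      next
        case False
        hence hG1: "h \<in> G1 - {g}" using hk(1) G_def by auto
        have "(monom_poly (k + lm lt h) :: (nat set, 'k) mpoly) \<in> ideal_gen ?V {monom_poly (lm lt h) | h. h \<in> G1 - {g} \<and> h \<noteq> 0}"
          by (rule mon_ideal_mem) (use hG1 hk(2) kk in auto)
        thus False using G1red[OF gG1(1) m] hk(3) by simp
      qed
    qed
    thus ?thesis using G1nz[OF gG1(1)] G1lc[OF gG1(1)] by blast
  qed
  show ?thesis unfolding reduced_groebner_basis_def groebner_basis_def
    using finG GK Gequiv red by blast
qed

theorem proposition6p4:
  fixes d :: nat and E :: "nat set set"
    and lt :: "nat set monom \<Rightarrow> nat set monom \<Rightarrow> bool"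
    and G1 :: "(nat set, 'k::field) mpoly set"
  assumes "simple_graph d E"
    and "monomial_order (stable_sets d E) lt"
    and "reduced_groebner_basis (stable_sets d E) lt (J_ideal d E) G1"
  shows "reduced_groebner_basis (stable_sets d E) lt (K_ideal d E)
           ((G1 - M_ideal d E) \<union> M_gens d E)"
  by (rule main_aux[OF assms(2,3) refl])

end
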